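(* Let $\nu\in\mathcal P_2(\mathbb R^d)$ and $\mathcal D\subset\mathcal P_2(\mathbb R^d)$. Consider the relaxed problem $$(\mathrm{R})\qquad \min_{\mu\in\mathcal D}\mathcal W_2^2(\mu,\nu)$$ and the self-consistent problem $$(\mathrm{S})\qquad \inf_{\mu\in\mathcal D}\ \inf_{\pi\in\mathcal M(\mu,\nu)}\int|x-y|^2\,d\pi(x,y).$$ Assume there exist a minimizer $\mu\in\mathcal D$ of $(\mathrm R)$ and an optimal coupling $\pi\in\Pi(\mu,\nu)$ for $\mathcal W_2^2(\mu,\nu)$ such that $(c_\pi)_\#\mu\in\mathcal D$. Then $(c_\pi)_\#\mu$ is optimal both for $(\mathrm R)$ and for $(\mathrm S)$ (in $(\mathrm S)$ together with the coupling $(\mathsf C_\pi)_\#\pi\in\mathcal M((c_\pi)_\#\mu,\nu)$), and the optimal values of $(\mathrm R)$ and $(\mathrm S)$ coincide.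
   Context: $\mathcal P_2(\mathbb R^d)$ is the set of Borel probability measures on $\mathbb R^d$ with finite second moment. $\Pi(\mu,\nu)$ is the set of couplings of $\mu,\nu$ and $\mathcal W_2^2(\mu,\nu)=\inf_{\pi\in\Pi(\mu,\nu)}\int|x-y|^2d\pi$. $\mathcal M(\mu,\nu)$ is the set of martingale couplings: laws $\pi=\mathcal L(X,Y)$ with $X\sim\mu$, $Y\sim\nu$ and $\mathbb E_\pi[Y\mid X]=X$. For $\pi\in\Pi(\mu,\nu)$ with disintegration $\pi=\mu\otimes\pi_x$ (i.e. $\pi(A\times B)=\int_A\pi_x(B)\,d\mu(x)$), the $\pi$-conditional barycentric map is $c_\pi(x)=\int y\,d\pi_x(y)$ ($\mu$-a.e.), and $\mathsf C_\pi(x,y)=(c_\pi(x),y)$. *)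

theory Defs
  imports "HOL-Probability.Probability"
begin

definition P2 :: "('a::euclidean_space) measure set" where
  "P2 = {\<mu>. prob_space \<mu> \<and> sets \<mu> = sets borel \<and>
             integrable \<mu> (\<lambda>x. (norm x)\<^sup>2)}"

definition couplings :: "('a::euclidean_space) measure \<Rightarrow> 'a measure \<Rightarrow> ('a \<times> 'a) measure set" where
  "couplings \<mu> \<nu> = {\<pi>. prob_space \<pi> \<and> sets \<pi> = sets (borel \<Otimes>\<^sub>M borel) \<and>
                         distr \<pi> borel fst = \<mu> \<and> distr \<pi> borel snd = \<nu>}"

definition cost :: "(('a::euclidean_space) \<times> 'a) measure \<Rightarrow> ennreal" where
  "cost \<pi> = (\<integral>\<^sup>+ p. ennreal ((norm (fst p - snd p))\<^sup>2) \<partial>\<pi>)"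

definition W2sq :: "('a::euclidean_space) measure \<Rightarrow> 'a measure \<Rightarrow> ennreal" where
  "W2sq \<mu> \<nu> = (INF \<pi> \<in> couplings \<mu> \<nu>. cost \<pi>)"

text \<open>Martingale couplings: E[Y | X] = X, i.e. E[1_A(X) (Y - X)] = 0 for all Borel A.\<close>
definition mart_couplings :: "('a::euclidean_space) measure \<Rightarrow> 'a measure \<Rightarrow> ('a \<times> 'a) measure set" where
  "mart_couplings \<mu> \<nu> = {\<pi> \<in> couplings \<mu> \<nu>.
      integrable \<pi> snd \<and> integrable \<pi> fst \<and>
      (\<forall>A \<in> sets borel. (\<integral>p. indicator A (fst p) *\<^sub>R (snd p - fst p) \<partial>\<pi>) = 0)}"

definition disintegration ::
  "('a::euclidean_space) measure \<Rightarrow> ('a \<times> 'a) measure \<Rightarrow> ('a \<Rightarrow> 'a measure) \<Rightarrow> bool" where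
  "disintegration \<mu> \<pi> K \<longleftrightarrow>
     (\<forall>x. prob_space (K x) \<and> sets (K x) = sets borel) \<and>
     (\<forall>B \<in> sets borel. (\<lambda>x. emeasure (K x) B) \<in> borel_measurable borel) \<and>
     (\<forall>A \<in> sets borel. \<forall>B \<in> sets borel.
        emeasure \<pi> (A \<times> B) = (\<integral>\<^sup>+ x. indicator A x * emeasure (K x) B \<partial>\<mu>))"

text \<open>Conditional barycentric map c_pi(x) = integral of y d pi_x(y), and C_pi(x,y) = (c_pi x, y).\<close>
definition bary :: "('a::euclidean_space \<Rightarrow> 'a measure) \<Rightarrow> 'a \<Rightarrow> 'a" where
  "bary K x = (\<integral>y. y \<partial>(K x))"

definition Cmap :: "('a::euclidean_space \<Rightarrow> 'a measure) \<Rightarrow> 'a \<times> 'a \<Rightarrow> 'a \<times> 'a" where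
  "Cmap K p = (bary K (fst p), snd p)"

end

theory Submission
  imports Defs
begin

lemma kernel_meas:
  assumes "disintegration \<mu> \<pi> K"
  shows "K \<in> borel \<rightarrow>\<^sub>M subprob_algebra borel"
  using assms unfolding disintegration_def
  by (intro measurable_subprob_algebra) (auto intro: prob_space_imp_subprob_space)

lemma R_meas:
  assumes "disintegration \<mu> \<pi> K"
  shows "(\<lambda>x. distr (K x) (borel \<Otimes>\<^sub>M borel) (Pair x)) \<in> borel \<rightarrow>\<^sub>M subprob_algebra (borel \<Otimes>\<^sub>M borel)"
  by (rule measurable_distr2[OF _ kernel_meas[OF assms]]) simp

lemma disint_bind:
  fixes \<mu> :: "'a::euclidean_space measure"
  assumes D: "disintegration \<mu> \<pi> K" and mu: "prob_space \<mu>" "sets \<mu> = sets borel"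
    and pi: "prob_space \<pi>" "sets \<pi> = sets (borel \<Otimes>\<^sub>M borel)"
  shows "\<pi> = \<mu> \<bind> (\<lambda>x. distr (K x) (borel \<Otimes>\<^sub>M borel) (Pair x))"
proof -
  let ?R = "\<lambda>x. distr (K x) (borel \<Otimes>\<^sub>M borel) (Pair x)"
  have Rm: "?R \<in> \<mu> \<rightarrow>\<^sub>M subprob_algebra (borel \<Otimes>\<^sub>M borel)"
    using R_meas[OF D] by (simp add: measurable_cong_sets[OF mu(2) refl])
  have sp: "space \<mu> \<noteq> {}" using mu(1) prob_space.not_empty by blast
  let ?E = "{a \<times> b |a b. a \<in> sets (borel::'a measure) \<and> b \<in> sets (borel::'a measure)}"
  show ?thesis
  proof (rule measure_eqI_generator_eq[OF Int_stable_pair_measure_generator[of borel borel]])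
    show "?E \<subseteq> Pow (space (borel \<Otimes>\<^sub>M borel))" by (auto simp: space_pair_measure)
    show "sets \<pi> = sigma_sets (space (borel \<Otimes>\<^sub>M borel)) ?E"
      using pi by (simp add: sets_pair_measure space_pair_measure)
    show "sets (\<mu> \<bind> ?R) = sigma_sets (space (borel \<Otimes>\<^sub>M borel)) ?E"
      using sets_bind[OF sets_kernel[OF Rm] sp] by (simp add: sets_pair_measure space_pair_measure)
    show "range (\<lambda>i. UNIV) \<subseteq> ?E" by (auto intro!: exI[of _ UNIV])
    show "(\<Union>i. UNIV) = space (borel \<Otimes>\<^sub>M borel)" by (simp add: space_pair_measure)
    show "emeasure \<pi> UNIV \<noteq> \<infinity>" for i :: nat
      using prob_space.emeasure_space_1[OF pi(1)] pi(2) sets_eq_imp_space_eq[OF pi(2)]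
      by (simp add: space_pair_measure)
    fix X assume "X \<in> ?E"
    then obtain A B where X: "X = A \<times> B" "A \<in> sets borel" "B \<in> sets borel" by auto
    have "emeasure (\<mu> \<bind> ?R) X = (\<integral>\<^sup>+ x. emeasure (?R x) X \<partial>\<mu>)"
      using X by (intro emeasure_bind[OF sp Rm]) auto
    also have "\<dots> = (\<integral>\<^sup>+ x. indicator A x * emeasure (K x) B \<partial>\<mu>)"
    proof (rule nn_integral_cong)
      fix x
      have sK: "sets (K x) = sets borel" using D unfolding disintegration_def by auto
      have "emeasure (?R x) X = emeasure (K x) (Pair x -` X \<inter> space (K x))"
        using X sK by (subst emeasure_distr) (auto simp: measurable_cong_sets[OF sK refl])
      also have "\<dots> = indicator A x * emeasure (K x) B"
        using X sets_eq_imp_space_eq[OF sK] by (auto simp: indicator_def)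
      finally show "emeasure (?R x) X = indicator A x * emeasure (K x) B" .
    qed
    also have "\<dots> = emeasure \<pi> X" using D X unfolding disintegration_def by auto
    finally show "emeasure \<pi> X = emeasure (\<mu> \<bind> ?R) X" ..
  qed
qed
lemma bind_integral_nonneg:
  fixes f :: "'b \<Rightarrow> real"
  assumes N[measurable]: "N \<in> M \<rightarrow>\<^sub>M subprob_algebra B" and M: "prob_space M"
    and f[measurable]: "f \<in> borel_measurable B" and nn: "\<And>x. 0 \<le> f x"
    and int: "integrable (M \<bind> N) f"
  shows "(AE x in M. integrable (N x) f) \<and> integrable M (\<lambda>x. \<integral>y. f y \<partial>N x)
     \<and> integral\<^sup>L (M \<bind> N) f = (\<integral>x. \<integral>y. f y \<partial>N x \<partial>M)"
proof -
  interpret prob_space M by fact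
  have sN: "sets (M \<bind> N) = sets B" using sets_bind[OF sets_kernel[OF N] not_empty] .
  have fin: "(\<integral>\<^sup>+x. \<integral>\<^sup>+y. ennreal (f y) \<partial>N x \<partial>M) < \<infinity>"
    using int nn_integral_bind[of "\<lambda>y. ennreal (f y)" B, OF _ N] f
    by (simp add: integrable_iff_bounded nn)
  have ae: "AE x in M. (\<integral>\<^sup>+y. ennreal (f y) \<partial>N x) \<noteq> \<infinity>"
    by (rule nn_integral_PInf_AE) (use fin in auto)
  have aeint: "AE x in M. integrable (N x) f"
    using ae AE_space
  proof eventually_elim
    case (elim x)
    then have sx: "sets (N x) = sets B" using sets_kernel[OF N] by simp
    have "f \<in> borel_measurable (N x)" by (subst measurable_cong_sets[OF sx refl]) (rule f)
    then show ?case using elim by (auto simp: integrable_iff_bounded nn less_top)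
  qed
  have eq1: "AE x in M. (\<integral>\<^sup>+y. ennreal (f y) \<partial>N x) = ennreal (\<integral>y. f y \<partial>N x)"
    using aeint by eventually_elim (rule nn_integral_eq_integral, auto simp: nn)
  have gm: "(\<lambda>x. \<integral>y. f y \<partial>N x) \<in> borel_measurable M"
    by (rule measurable_compose[OF N integral_measurable_subprob_algebra[OF f]])
  have nng: "\<And>x. 0 \<le> (\<integral>y. f y \<partial>N x)" by (simp add: nn)
  have fin2: "(\<integral>\<^sup>+x. ennreal (\<integral>y. f y \<partial>N x) \<partial>M) < \<infinity>"
    using fin eq1 by (simp add: nn_integral_cong_AE)
  have gint: "integrable M (\<lambda>x. \<integral>y. f y \<partial>N x)"
    using gm fin2 by (simp add: integrable_iff_bounded nng)
  have "ennreal (integral\<^sup>L (M \<bind> N) f) = (\<integral>\<^sup>+y. ennreal (f y) \<partial>(M \<bind> N))"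
    by (rule nn_integral_eq_integral[symmetric]) (use int nn in auto)
  also have "\<dots> = (\<integral>\<^sup>+x. \<integral>\<^sup>+y. ennreal (f y) \<partial>N x \<partial>M)"
    by (rule nn_integral_bind[OF _ N]) simp
  also have "\<dots> = (\<integral>\<^sup>+x. ennreal (\<integral>y. f y \<partial>N x) \<partial>M)"
    using eq1 by (simp add: nn_integral_cong_AE)
  also have "\<dots> = ennreal (\<integral>x. \<integral>y. f y \<partial>N x \<partial>M)"
    by (rule nn_integral_eq_integral) (use gint nng in auto)
  finally have eq: "integral\<^sup>L (M \<bind> N) f = (\<integral>x. \<integral>y. f y \<partial>N x \<partial>M)"
    by (subst (asm) ennreal_inj) (auto simp: nn nng intro!: integral_nonneg_AE Bochner_Integration.integral_nonneg)
  show ?thesis by (intro conjI aeint gint eq)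
qed
lemma bind_integral_real:
  fixes f :: "'b \<Rightarrow> real"
  assumes N[measurable]: "N \<in> M \<rightarrow>\<^sub>M subprob_algebra B" and M: "prob_space M"
    and f[measurable]: "f \<in> borel_measurable B"
    and int: "integrable (M \<bind> N) f"
  shows "(AE x in M. integrable (N x) f) \<and> integrable M (\<lambda>x. \<integral>y. f y \<partial>N x)
     \<and> integral\<^sup>L (M \<bind> N) f = (\<integral>x. \<integral>y. f y \<partial>N x \<partial>M)"
proof -
  interpret prob_space M by fact
  have sN: "sets (M \<bind> N) = sets B" using sets_bind[OF sets_kernel[OF N] not_empty] .
  have fm: "f \<in> borel_measurable (M \<bind> N)" by (subst measurable_cong_sets[OF sN refl]) (rule f)
  have ip: "integrable (M \<bind> N) (\<lambda>y. max (f y) 0)" using int fm by (intro integrable_max) auto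
  have im: "integrable (M \<bind> N) (\<lambda>y. max (- f y) 0)" using int fm by (intro integrable_max) auto
  have P: "(AE x in M. integrable (N x) (\<lambda>y. max (f y) 0)) \<and> integrable M (\<lambda>x. \<integral>y. max (f y) 0 \<partial>N x)
     \<and> integral\<^sup>L (M \<bind> N) (\<lambda>y. max (f y) 0) = (\<integral>x. \<integral>y. max (f y) 0 \<partial>N x \<partial>M)"
    by (rule bind_integral_nonneg[OF N M _ _ ip]) auto
  have Q: "(AE x in M. integrable (N x) (\<lambda>y. max (- f y) 0)) \<and> integrable M (\<lambda>x. \<integral>y. max (- f y) 0 \<partial>N x)
     \<and> integral\<^sup>L (M \<bind> N) (\<lambda>y. max (- f y) 0) = (\<integral>x. \<integral>y. max (- f y) 0 \<partial>N x \<partial>M)"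
    by (rule bind_integral_nonneg[OF N M _ _ im]) auto
  have Pa: "AE x in M. integrable (N x) (\<lambda>y. max (f y) 0)" using P by blast
  have Qa: "AE x in M. integrable (N x) (\<lambda>y. max (- f y) 0)" using Q by blast
  have fd: "(\<lambda>y. max (f y) 0 - max (- f y) 0) = f" by (rule ext) auto
  have ae1: "AE x in M. integrable (N x) f"
    using Pa Qa
  proof eventually_elim
    case (elim x)
    then have "integrable (N x) (\<lambda>y. max (f y) 0 - max (- f y) 0)" by auto
    then show ?case by (simp only: fd)
  qed
  have ae2: "AE x in M. (\<integral>y. f y \<partial>N x) = (\<integral>y. max (f y) 0 \<partial>N x) - (\<integral>y. max (- f y) 0 \<partial>N x)"
    using Pa Qa
  proof eventually_elim
    case (elim x)
    have "(\<integral>y. f y \<partial>N x) = (\<integral>y. max (f y) 0 - max (- f y) 0 \<partial>N x)" by (simp only: fd)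
    also have "\<dots> = (\<integral>y. max (f y) 0 \<partial>N x) - (\<integral>y. max (- f y) 0 \<partial>N x)"
      using elim by (intro Bochner_Integration.integral_diff) auto
    finally show ?case .
  qed
  have gm: "(\<lambda>x. \<integral>y. f y \<partial>N x) \<in> borel_measurable M"
    by (rule measurable_compose[OF N integral_measurable_subprob_algebra[OF f]])
  have di: "integrable M (\<lambda>x. (\<integral>y. max (f y) 0 \<partial>N x) - (\<integral>y. max (- f y) 0 \<partial>N x))"
    using P Q by (intro Bochner_Integration.integrable_diff) auto
  have gi: "integrable M (\<lambda>x. \<integral>y. f y \<partial>N x)"
    using integrable_cong_AE[OF gm borel_measurable_integrable[OF di] ae2] di by blast
  have "integral\<^sup>L (M \<bind> N) f = integral\<^sup>L (M \<bind> N) (\<lambda>y. max (f y) 0 - max (- f y) 0)"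
    by (simp only: fd)
  also have "\<dots> = integral\<^sup>L (M \<bind> N) (\<lambda>y. max (f y) 0) - integral\<^sup>L (M \<bind> N) (\<lambda>y. max (- f y) 0)"
    using ip im by (rule Bochner_Integration.integral_diff)
  also have "\<dots> = (\<integral>x. (\<integral>y. max (f y) 0 \<partial>N x) - (\<integral>y. max (- f y) 0 \<partial>N x) \<partial>M)"
    using P Q by (simp add: Bochner_Integration.integral_diff)
  also have "\<dots> = (\<integral>x. \<integral>y. f y \<partial>N x \<partial>M)"
    using ae2 by (intro integral_cong_AE) (auto simp: gi[THEN borel_measurable_integrable])
  finally show ?thesis using ae1 gi by blast
qed
lemma le_one_plus_sq: "(t::real) \<le> 1 + t\<^sup>2"
proof -
  have "0 \<le> (t - 1/2)\<^sup>2" by simp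
  then have "0 \<le> t\<^sup>2 - t + 1/4" by (simp add: power2_eq_square algebra_simps)
  then show ?thesis by linarith
qed

lemma sq_decomp:
  fixes x m y :: "'a::real_inner"
  shows "(norm (m - y))\<^sup>2 = (norm (x - y))\<^sup>2 - (norm (x - m))\<^sup>2 - 2 * ((x - m) \<bullet> m - (x - m) \<bullet> y)"
proof -
  have "x - y = (x - m) + (m - y)" by simp
  then have "(norm (x - y))\<^sup>2 = (norm (x - m))\<^sup>2 + 2 * ((x - m) \<bullet> (m - y)) + (norm (m - y))\<^sup>2"
    by (metis power2_norm_eq_inner inner_add_left inner_add_right inner_commute mult_2 add.assoc)
  then show ?thesis by (simp add: inner_diff_right)
qed

lemma var_le:
  fixes M :: "'a::euclidean_space measure"
  assumes P: "prob_space M" and S: "sets M = sets borel"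
  shows "(\<integral>\<^sup>+y. ennreal ((norm ((\<integral>z. z \<partial>M) - y))\<^sup>2) \<partial>M) \<le> (\<integral>\<^sup>+y. ennreal ((norm (x - y))\<^sup>2) \<partial>M)"
proof (cases "(\<integral>\<^sup>+y. ennreal ((norm (x - y))\<^sup>2) \<partial>M) = \<infinity>")
  case True then show ?thesis by simp
next
  case False
  interpret prob_space M by fact
  have meas[measurable]: "g \<in> borel_measurable M" if "g \<in> borel_measurable borel" for g :: "'a \<Rightarrow> 'b::topological_space"
    using that by (subst measurable_cong_sets[OF S refl])
  define m where "m = (\<integral>z. z \<partial>M)"
  have hi: "integrable M (\<lambda>y. (norm (x - y))\<^sup>2)"
    using False by (auto simp: integrable_iff_bounded less_top)
  have bnd: "norm y \<le> norm x + 1 + (norm (x - y))\<^sup>2" for y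
  proof -
    have "norm y \<le> norm x + norm (x - y)" by (metis norm_triangle_sub add.commute norm_minus_commute)
    moreover have "norm (x - y) \<le> 1 + (norm (x - y))\<^sup>2" by (rule le_one_plus_sq)
    ultimately show ?thesis by simp
  qed
  have yi: "integrable M (\<lambda>y. y)"
  proof (rule Bochner_Integration.integrable_bound[of _ "\<lambda>y. norm x + 1 + (norm (x - y))\<^sup>2"])
    show "integrable M (\<lambda>y. norm x + 1 + (norm (x - y))\<^sup>2)" using hi by simp
    show "(\<lambda>y. y) \<in> borel_measurable M" by simp
    show "AE y in M. norm y \<le> norm (norm x + 1 + (norm (x - y))\<^sup>2)"
      using bnd by (auto intro!: AE_I2 order.trans[OF bnd])
  qed
  have li: "integrable M (\<lambda>y. (x - m) \<bullet> m - (x - m) \<bullet> y)" using yi by auto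
  have eqf: "(\<lambda>y. (norm (m - y))\<^sup>2) = (\<lambda>y. (norm (x - y))\<^sup>2 - (norm (x - m))\<^sup>2 - 2 * ((x - m) \<bullet> m - (x - m) \<bullet> y))"
    by (rule ext) (rule sq_decomp)
  have gi: "integrable M (\<lambda>y. (norm (m - y))\<^sup>2)"
    unfolding eqf
    by (intro Bochner_Integration.integrable_diff integrable_mult_right hi li integrable_const finite_measure_axioms)
  have zero: "(\<integral>y. (x - m) \<bullet> m - (x - m) \<bullet> y \<partial>M) = 0"
    using yi by (simp add: Bochner_Integration.integral_diff m_def prob_space)
  have "(\<integral>y. (norm (m - y))\<^sup>2 \<partial>M) = (\<integral>y. (norm (x - y))\<^sup>2 \<partial>M) - (norm (x - m))\<^sup>2"
  proof -
    have ci: "integrable M (\<lambda>y. (norm (x - m))\<^sup>2)" by (rule integrable_const)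
    have a: "integrable M (\<lambda>y. (norm (x - y))\<^sup>2 - (norm (x - m))\<^sup>2)"
      by (rule Bochner_Integration.integrable_diff[OF hi ci])
    have b: "integrable M (\<lambda>y. 2 * ((x - m) \<bullet> m - (x - m) \<bullet> y))"
      by (rule integrable_mult_right[OF li])
    have "(\<integral>y. (norm (x - y))\<^sup>2 - (norm (x - m))\<^sup>2 - 2 * ((x - m) \<bullet> m - (x - m) \<bullet> y) \<partial>M)
       = (\<integral>y. (norm (x - y))\<^sup>2 - (norm (x - m))\<^sup>2 \<partial>M) - (\<integral>y. 2 * ((x - m) \<bullet> m - (x - m) \<bullet> y) \<partial>M)"
      by (rule Bochner_Integration.integral_diff[OF a b])
    also have "(\<integral>y. (norm (x - y))\<^sup>2 - (norm (x - m))\<^sup>2 \<partial>M) = (\<integral>y. (norm (x - y))\<^sup>2 \<partial>M) - (norm (x - m))\<^sup>2"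
      by (subst Bochner_Integration.integral_diff[OF hi ci]) (simp add: prob_space)
    also have "(\<integral>y. 2 * ((x - m) \<bullet> m - (x - m) \<bullet> y) \<partial>M) = 0"
      by (subst integral_mult_right_zero) (simp only: zero mult_zero_right)
    finally show ?thesis unfolding eqf by simp
  qed
  then have le: "(\<integral>y. (norm (m - y))\<^sup>2 \<partial>M) \<le> (\<integral>y. (norm (x - y))\<^sup>2 \<partial>M)" by simp
  have "(\<integral>\<^sup>+y. ennreal ((norm (m - y))\<^sup>2) \<partial>M) = ennreal (\<integral>y. (norm (m - y))\<^sup>2 \<partial>M)"
    using gi by (intro nn_integral_eq_integral) auto
  also have "\<dots> \<le> ennreal (\<integral>y. (norm (x - y))\<^sup>2 \<partial>M)" using le by (rule ennreal_leI)
  also have "\<dots> = (\<integral>\<^sup>+y. ennreal ((norm (x - y))\<^sup>2) \<partial>M)"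
    using hi by (intro nn_integral_eq_integral[symmetric]) auto
  finally show ?thesis by (simp add: m_def)
qed
lemma nn_disint:
  fixes \<mu> :: "'a::euclidean_space measure"
  assumes D: "disintegration \<mu> \<pi> K" and mu: "prob_space \<mu>" "sets \<mu> = sets borel"
    and pi: "prob_space \<pi>" "sets \<pi> = sets (borel \<Otimes>\<^sub>M borel)"
    and f: "f \<in> borel_measurable (borel \<Otimes>\<^sub>M borel)"
  shows "(\<integral>\<^sup>+p. f p \<partial>\<pi>) = (\<integral>\<^sup>+x. \<integral>\<^sup>+y. f (x, y) \<partial>K x \<partial>\<mu>)"
proof -
  let ?R = "\<lambda>x. distr (K x) (borel \<Otimes>\<^sub>M borel) (Pair x)"
  have Rm: "?R \<in> \<mu> \<rightarrow>\<^sub>M subprob_algebra (borel \<Otimes>\<^sub>M borel)"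
    using R_meas[OF D] by (simp add: measurable_cong_sets[OF mu(2) refl])
  have "(\<integral>\<^sup>+p. f p \<partial>\<pi>) = (\<integral>\<^sup>+x. \<integral>\<^sup>+p. f p \<partial>?R x \<partial>\<mu>)"
    by (subst disint_bind[OF D mu pi]) (rule nn_integral_bind[OF f Rm])
  also have "\<dots> = (\<integral>\<^sup>+x. \<integral>\<^sup>+y. f (x, y) \<partial>K x \<partial>\<mu>)"
  proof (rule nn_integral_cong)
    fix x
    have sK: "sets (K x) = sets borel" using D unfolding disintegration_def by auto
    have pm: "Pair x \<in> K x \<rightarrow>\<^sub>M borel \<Otimes>\<^sub>M borel" by (simp add: measurable_cong_sets[OF sK refl])
    show "(\<integral>\<^sup>+p. f p \<partial>?R x) = (\<integral>\<^sup>+y. f (x, y) \<partial>K x)"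
      by (rule nn_integral_distr[OF pm]) (simp add: f)
  qed
  finally show ?thesis .
qed

lemma int_disint_real:
  fixes \<mu> :: "'a::euclidean_space measure" and f :: "'a \<times> 'a \<Rightarrow> real"
  assumes D: "disintegration \<mu> \<pi> K" and mu: "prob_space \<mu>" "sets \<mu> = sets borel"
    and pi: "prob_space \<pi>" "sets \<pi> = sets (borel \<Otimes>\<^sub>M borel)"
    and f: "f \<in> borel_measurable (borel \<Otimes>\<^sub>M borel)" and int: "integrable \<pi> f"
  shows "(AE x in \<mu>. integrable (K x) (\<lambda>y. f (x, y))) \<and>
         integral\<^sup>L \<pi> f = (\<integral>x. \<integral>y. f (x, y) \<partial>K x \<partial>\<mu>)"
proof -
  let ?R = "\<lambda>x. distr (K x) (borel \<Otimes>\<^sub>M borel) (Pair x)"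
  have Rm: "?R \<in> \<mu> \<rightarrow>\<^sub>M subprob_algebra (borel \<Otimes>\<^sub>M borel)"
    using R_meas[OF D] by (simp add: measurable_cong_sets[OF mu(2) refl])
  have pe: "\<pi> = \<mu> \<bind> ?R" by (rule disint_bind[OF D mu pi])
  have B: "(AE x in \<mu>. integrable (?R x) f) \<and> integrable \<mu> (\<lambda>x. \<integral>y. f y \<partial>?R x)
     \<and> integral\<^sup>L (\<mu> \<bind> ?R) f = (\<integral>x. \<integral>y. f y \<partial>?R x \<partial>\<mu>)"
    by (rule bind_integral_real[OF Rm mu(1) f]) (use int pe in simp)
  have eqx: "integrable (?R x) f = integrable (K x) (\<lambda>y. f (x, y))"
        "(\<integral>y. f y \<partial>?R x) = (\<integral>y. f (x, y) \<partial>K x)" for x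
  proof -
    have sK: "sets (K x) = sets borel" using D unfolding disintegration_def by auto
    have pm: "Pair x \<in> K x \<rightarrow>\<^sub>M borel \<Otimes>\<^sub>M borel" by (simp add: measurable_cong_sets[OF sK refl])
    show "integrable (?R x) f = integrable (K x) (\<lambda>y. f (x, y))"
      by (rule integrable_distr_eq[OF pm f])
    show "(\<integral>y. f y \<partial>?R x) = (\<integral>y. f (x, y) \<partial>K x)"
      by (rule integral_distr[OF pm f])
  qed
  show ?thesis using B pe by (simp add: eqx)
qed
lemma P2_int:
  assumes "\<mu> \<in> P2" shows "integrable \<mu> (\<lambda>z. z)"
proof -
  have p: "prob_space \<mu>" and s: "sets \<mu> = sets borel" and i: "integrable \<mu> (\<lambda>x. (norm x)\<^sup>2)"
    using assms unfolding P2_def by auto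
  interpret prob_space \<mu> by fact
  show ?thesis
  proof (rule Bochner_Integration.integrable_bound[of _ "\<lambda>z. 1 + (norm z)\<^sup>2"])
    show "integrable \<mu> (\<lambda>z. 1 + (norm z)\<^sup>2)" using i by simp
    show "(\<lambda>z. z) \<in> borel_measurable \<mu>" by (simp add: measurable_cong_sets[OF s refl])
    show "AE z in \<mu>. norm z \<le> norm (1 + (norm z)\<^sup>2)"
      by (intro AE_I2) (simp add: le_one_plus_sq)
  qed
qed

lemma bary_meas:
  assumes "disintegration \<mu> \<pi> K" shows "bary K \<in> borel_measurable borel"
proof -
  have e: "bary K = (\<lambda>x. integral\<^sup>L (K x) (\<lambda>y. y))" by (rule ext) (simp add: bary_def)
  show ?thesis unfolding e
    by (rule measurable_compose[OF kernel_meas[OF assms] integral_measurable_subprob_algebra]) simp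
qed
theorem mainTheorem1:
  fixes \<nu> \<mu> :: "'a::euclidean_space measure"
    and D :: "'a measure set"
    and \<pi> :: "('a \<times> 'a) measure"
    and K :: "'a \<Rightarrow> 'a measure"
  assumes "\<nu> \<in> P2"
    and "D \<subseteq> P2"
    and "\<mu> \<in> D"
    and "\<forall>\<mu>' \<in> D. W2sq \<mu> \<nu> \<le> W2sq \<mu>' \<nu>"
    and "\<pi> \<in> couplings \<mu> \<nu>"
    and "cost \<pi> = W2sq \<mu> \<nu>"
    and "disintegration \<mu> \<pi> K"
    and "distr \<mu> borel (bary K) \<in> D"
  shows "(\<forall>\<mu>' \<in> D. W2sq (distr \<mu> borel (bary K)) \<nu> \<le> W2sq \<mu>' \<nu>)
     \<and> distr \<pi> (borel \<Otimes>\<^sub>M borel) (Cmap K) \<in> mart_couplings (distr \<mu> borel (bary K)) \<nu>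
     \<and> (\<forall>\<mu>' \<in> D. \<forall>\<rho> \<in> mart_couplings \<mu>' \<nu>.
           cost (distr \<pi> (borel \<Otimes>\<^sub>M borel) (Cmap K)) \<le> cost \<rho>)
     \<and> (INF \<mu>' \<in> D. W2sq \<mu>' \<nu>) = (INF \<mu>' \<in> D. INF \<rho> \<in> mart_couplings \<mu>' \<nu>. cost \<rho>)"
proof -
  note nuP2 = assms(1) and DP2 = assms(2) and muD = assms(3) and opt = assms(4)
    and cpl = assms(5) and pcost = assms(6) and Dis = assms(7) and cD = assms(8)
  define c where "c = bary K"
  define \<pi>' where "\<pi>' = distr \<pi> (borel \<Otimes>\<^sub>M borel) (Cmap K)"
  define \<mu>c where "\<mu>c = distr \<mu> borel c"
  have muP2: "\<mu> \<in> P2" using DP2 muD by auto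
  have mup: "prob_space \<mu>" and mus: "sets \<mu> = sets borel" using muP2 unfolding P2_def by auto
  have nup: "prob_space \<nu>" and nus: "sets \<nu> = sets borel" using nuP2 unfolding P2_def by auto
  have pip: "prob_space \<pi>" and pis: "sets \<pi> = sets (borel \<Otimes>\<^sub>M borel)"
    and pifst: "distr \<pi> borel fst = \<mu>" and pisnd: "distr \<pi> borel snd = \<nu>"
    using cpl unfolding couplings_def by auto
  have cm[measurable]: "c \<in> borel_measurable borel" unfolding c_def by (rule bary_meas[OF Dis])
  have Cm_eq: "Cmap K = (\<lambda>p. (c (fst p), snd p))" by (rule ext) (simp add: Cmap_def c_def)
  have Cm: "Cmap K \<in> borel \<Otimes>\<^sub>M borel \<rightarrow>\<^sub>M borel \<Otimes>\<^sub>M borel" unfolding Cm_eq by measurable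
  have Cmpi: "Cmap K \<in> \<pi> \<rightarrow>\<^sub>M borel \<Otimes>\<^sub>M borel" using Cm by (simp add: measurable_cong_sets[OF pis refl])
  have fstpi: "fst \<in> \<pi> \<rightarrow>\<^sub>M borel" by (simp add: measurable_cong_sets[OF pis refl])
  have sndpi: "snd \<in> \<pi> \<rightarrow>\<^sub>M borel" by (simp add: measurable_cong_sets[OF pis refl])
  have cmu: "c \<in> \<mu> \<rightarrow>\<^sub>M borel" by (simp add: measurable_cong_sets[OF mus refl])
  have \<mu>cP2: "\<mu>c \<in> P2" using cD DP2 unfolding \<mu>c_def c_def by auto
  have pi'p: "prob_space \<pi>'" unfolding \<pi>'_def by (rule prob_space.prob_space_distr[OF pip Cmpi])
  have pi's: "sets \<pi>' = sets (borel \<Otimes>\<^sub>M borel)" unfolding \<pi>'_def by simp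
  have fst': "distr \<pi>' borel fst = \<mu>c"
  proof -
    have "distr \<pi>' borel fst = distr \<pi> borel (fst \<circ> Cmap K)"
      unfolding \<pi>'_def by (rule distr_distr[OF _ Cmpi]) simp
    also have "fst \<circ> Cmap K = c \<circ> fst" by (rule ext) (simp add: Cm_eq)
    also have "distr \<pi> borel (c \<circ> fst) = distr (distr \<pi> borel fst) borel c"
      by (rule distr_distr[symmetric, OF cm fstpi])
    finally show ?thesis by (simp add: pifst \<mu>c_def)
  qed
  have snd': "distr \<pi>' borel snd = \<nu>"
  proof -
    have "distr \<pi>' borel snd = distr \<pi> borel (snd \<circ> Cmap K)"
      unfolding \<pi>'_def by (rule distr_distr[OF _ Cmpi]) simp
    also have "snd \<circ> Cmap K = snd" by (rule ext) (simp add: Cm_eq)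
    finally show ?thesis by (simp add: pisnd)
  qed
  have cpl': "\<pi>' \<in> couplings \<mu>c \<nu>" unfolding couplings_def using pi'p pi's fst' snd' by auto
  have costle: "cost \<pi>' \<le> cost \<pi>"
  proof -
    have "cost \<pi>' = (\<integral>\<^sup>+p. ennreal ((norm (c (fst p) - snd p))\<^sup>2) \<partial>\<pi>)"
      unfolding cost_def \<pi>'_def by (subst nn_integral_distr[OF Cmpi]) (auto simp: Cm_eq)
    also have "\<dots> = (\<integral>\<^sup>+x. \<integral>\<^sup>+y. ennreal ((norm (c x - y))\<^sup>2) \<partial>K x \<partial>\<mu>)"
      by (rule nn_disint[OF Dis mup mus pip pis, of "\<lambda>p. ennreal ((norm (c (fst p) - snd p))\<^sup>2)", simplified]) measurable
    also have "\<dots> \<le> (\<integral>\<^sup>+x. \<integral>\<^sup>+y. ennreal ((norm (x - y))\<^sup>2) \<partial>K x \<partial>\<mu>)"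
    proof (rule nn_integral_mono)
      fix x
      have "prob_space (K x)" "sets (K x) = sets borel" using Dis unfolding disintegration_def by auto
      from var_le[OF this, of x]
      show "(\<integral>\<^sup>+y. ennreal ((norm (c x - y))\<^sup>2) \<partial>K x) \<le> (\<integral>\<^sup>+y. ennreal ((norm (x - y))\<^sup>2) \<partial>K x)"
        by (simp add: c_def bary_def)
    qed
    also have "\<dots> = cost \<pi>"
      unfolding cost_def
      by (rule nn_disint[OF Dis mup mus pip pis, of "\<lambda>p. ennreal ((norm (fst p - snd p))\<^sup>2)", simplified, symmetric]) measurable
    finally show ?thesis .
  qed
  have W2le: "W2sq \<mu>c \<nu> \<le> cost \<pi>'" unfolding W2sq_def using cpl' by (rule INF_lower)
  have mart': "\<pi>' \<in> mart_couplings \<mu>c \<nu>"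
  proof -
    have isnd: "integrable \<pi>' snd"
    proof -
      have "integrable (distr \<pi>' borel snd) (\<lambda>z. z)" using P2_int[OF nuP2] snd' by simp
      then show ?thesis by (subst (asm) integrable_distr_eq) (auto simp: measurable_cong_sets[OF pi's refl])
    qed
    have ifst: "integrable \<pi>' fst"
    proof -
      have "integrable (distr \<pi>' borel fst) (\<lambda>z. z)" using P2_int[OF \<mu>cP2] fst' by simp
      then show ?thesis by (subst (asm) integrable_distr_eq) (auto simp: measurable_cong_sets[OF pi's refl])
    qed
    have isndpi: "integrable \<pi> snd"
    proof -
      have "integrable (distr \<pi> borel snd) (\<lambda>z. z)" using P2_int[OF nuP2] pisnd by simp
      then show ?thesis by (subst (asm) integrable_distr_eq) (auto simp: sndpi)
    qed
    have aeK: "AE x in \<mu>. integrable (K x) (\<lambda>y. y)"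
    proof -
      have "integrable \<pi> (\<lambda>p. norm (snd p))" using isndpi by simp
      from int_disint_real[OF Dis mup mus pip pis _ this]
      have "AE x in \<mu>. integrable (K x) (\<lambda>y. norm y)" by simp
      then show ?thesis
      proof eventually_elim
        case (elim x)
        have sK: "sets (K x) = sets borel" using Dis unfolding disintegration_def by auto
        have "(\<lambda>y. y) \<in> borel_measurable (K x)" by (simp add: measurable_cong_sets[OF sK refl])
        then show ?case using elim integrable_norm_iff by blast
      qed
    qed
    have zero: "(\<integral>p. indicator A (fst p) *\<^sub>R (snd p - fst p) \<partial>\<pi>') = 0" if A: "A \<in> sets borel" for A
    proof -
      let ?g = "\<lambda>p. indicator A (fst p) *\<^sub>R (snd p - fst p) :: 'a"
      have gm: "?g \<in> borel_measurable (borel \<Otimes>\<^sub>M borel)" using A by measurable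
      have gi: "integrable \<pi>' ?g"
      proof (rule Bochner_Integration.integrable_bound[of _ "\<lambda>p. snd p - fst p"])
        show "integrable \<pi>' (\<lambda>p. snd p - fst p)" using isnd ifst by auto
        show "?g \<in> borel_measurable \<pi>'" using gm by (simp add: measurable_cong_sets[OF pi's refl])
        show "AE p in \<pi>'. norm (?g p) \<le> norm (snd p - fst p)"
          by (intro AE_I2) (auto simp: indicator_def)
      qed
      have gpi: "integrable \<pi> (\<lambda>p. ?g (Cmap K p))"
        using gi unfolding \<pi>'_def by (subst (asm) integrable_distr_eq[OF Cmpi gm])
      show ?thesis
      proof (rule euclidean_eqI)
        fix b :: 'a assume b: "b \<in> Basis"
        let ?h = "\<lambda>p. ?g (Cmap K p) \<bullet> b"
        have hm: "?h \<in> borel_measurable (borel \<Otimes>\<^sub>M borel)"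
          using gm Cm by measurable
        have hi: "integrable \<pi> ?h" by (rule integrable_inner_left) (rule gpi)
        have "(\<integral>p. ?g p \<partial>\<pi>') \<bullet> b = (\<integral>p. ?g p \<bullet> b \<partial>\<pi>')" by (rule integral_inner_left[symmetric]) (rule gi)
        also have "\<dots> = (\<integral>p. ?h p \<partial>\<pi>)"
          unfolding \<pi>'_def by (rule integral_distr[OF Cmpi]) (use gm in measurable)
        also have "\<dots> = (\<integral>x. \<integral>y. ?h (x, y) \<partial>K x \<partial>\<mu>)"
          using int_disint_real[OF Dis mup mus pip pis hm hi] by blast
        also have "\<dots> = 0"
        proof (rule integral_eq_zero_AE)
          show "AE x in \<mu>. (\<integral>y. ?h (x, y) \<partial>K x) = 0"
            using aeK
          proof eventually_elim
            case (elim x)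
            interpret Kx: prob_space "K x" using Dis unfolding disintegration_def by auto
            have e: "\<And>y. ?h (x, y) = (indicator A (c x) *\<^sub>R (y - c x)) \<bullet> b"
              by (simp add: Cm_eq)
            have i2: "integrable (K x) (\<lambda>y. indicator A (c x) *\<^sub>R (y - c x))"
              using elim by auto
            have "(\<integral>y. ?h (x, y) \<partial>K x) = (\<integral>y. indicator A (c x) *\<^sub>R (y - c x) \<partial>K x) \<bullet> b"
              unfolding e by (rule integral_inner_left) (rule i2)
            also have "(\<integral>y. indicator A (c x) *\<^sub>R (y - c x) \<partial>K x) = indicator A (c x) *\<^sub>R ((\<integral>y. y \<partial>K x) - c x)"
              using elim by (simp add: Bochner_Integration.integral_diff Kx.prob_space)
            also have "(\<integral>y. y \<partial>K x) - c x = 0" by (simp add: c_def bary_def)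
            finally show ?case by simp
          qed
        qed
        also have "\<dots> = 0 \<bullet> b" by simp
        finally show "(\<integral>p. ?g p \<partial>\<pi>') \<bullet> b = 0 \<bullet> b" .
      qed
    qed
    show ?thesis unfolding mart_couplings_def using cpl' isnd ifst zero by auto
  qed
  have part1: "\<forall>\<mu>' \<in> D. W2sq \<mu>c \<nu> \<le> W2sq \<mu>' \<nu>"
    using W2le costle pcost opt by (metis order_trans)
  have part3: "\<forall>\<mu>' \<in> D. \<forall>\<rho> \<in> mart_couplings \<mu>' \<nu>. cost \<pi>' \<le> cost \<rho>"
  proof (intro ballI)
    fix \<mu>' \<rho> assume m: "\<mu>' \<in> D" and r: "\<rho> \<in> mart_couplings \<mu>' \<nu>"
    then have "\<rho> \<in> couplings \<mu>' \<nu>" unfolding mart_couplings_def by auto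
    then have "W2sq \<mu>' \<nu> \<le> cost \<rho>" unfolding W2sq_def by (rule INF_lower)
    then show "cost \<pi>' \<le> cost \<rho>" using costle pcost opt m by (metis order_trans)
  qed
  have part4: "(INF \<mu>' \<in> D. W2sq \<mu>' \<nu>) = (INF \<mu>' \<in> D. INF \<rho> \<in> mart_couplings \<mu>' \<nu>. cost \<rho>)"
  proof (rule antisym)
    show "(INF \<mu>' \<in> D. W2sq \<mu>' \<nu>) \<le> (INF \<mu>' \<in> D. INF \<rho> \<in> mart_couplings \<mu>' \<nu>. cost \<rho>)"
    proof (rule INF_mono)
      fix m assume m: "m \<in> D"
      have "W2sq m \<nu> \<le> (INF \<rho> \<in> mart_couplings m \<nu>. cost \<rho>)"
        unfolding W2sq_def by (rule INF_superset_mono) (auto simp: mart_couplings_def)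
      then show "\<exists>n\<in>D. W2sq n \<nu> \<le> (INF \<rho> \<in> mart_couplings m \<nu>. cost \<rho>)" using m by blast
    qed
    have "(INF \<mu>' \<in> D. INF \<rho> \<in> mart_couplings \<mu>' \<nu>. cost \<rho>) \<le> (INF \<rho> \<in> mart_couplings \<mu>c \<nu>. cost \<rho>)"
      using cD unfolding \<mu>c_def c_def by (rule INF_lower)
    also have "\<dots> \<le> cost \<pi>'" using mart' by (rule INF_lower)
    also have "\<dots> \<le> W2sq \<mu> \<nu>" using costle pcost by simp
    also have "\<dots> \<le> (INF \<mu>' \<in> D. W2sq \<mu>' \<nu>)" using opt by (intro INF_greatest) auto
    finally show "(INF \<mu>' \<in> D. INF \<rho> \<in> mart_couplings \<mu>' \<nu>. cost \<rho>) \<le> (INF \<mu>' \<in> D. W2sq \<mu>' \<nu>)" .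
  qed
  show ?thesis using part1 mart' part3 part4 unfolding \<pi>'_def \<mu>c_def c_def by blast
qed

end
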